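(* Let $A\overset{i}{\to}U\overset{j}{\to}S$ be an extension of a semilattice of groups $A$ by an inverse semigroup $S$, and suppose $S$ is an $F$-inverse monoid. Then there exists an order-preserving transversal $\rho$ of $j$.
   Context: A semilattice of groups is an inverse semigroup whose idempotents are central. An extension of $A$ by $S$ is an inverse semigroup $U$ with a monomorphism $i:A\to U$ and an idempotent-separating epimorphism $j:U\to S$ with $i(A)=j^{-1}(E(S))$. A transversal of $j$ is a map $\rho:S\to U$ with $j\circ\rho=\mathrm{id}_S$ and $\rho(E(S))\subseteq E(U)$; it is order-preserving if $s\le t$ implies $\rho(s)\le\rho(t)$ (natural partial orders). An $F$-inverse monoid is an inverse semigroup in which every class of the minimum group congruence $\sigma$ ($(s,t)\in\sigma$ iff $es=et$ for some idempotent $e$) has a maximum element. *)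

theory Defs
  imports Main
begin

definition semigroup_on :: "'a set \<Rightarrow> ('a \<Rightarrow> 'a \<Rightarrow> 'a) \<Rightarrow> bool" where
  "semigroup_on S m \<longleftrightarrow>
     (\<forall>x\<in>S. \<forall>y\<in>S. m x y \<in> S) \<and>
     (\<forall>x\<in>S. \<forall>y\<in>S. \<forall>z\<in>S. m (m x y) z = m x (m y z))"

definition inverse_semigroup_on :: "'a set \<Rightarrow> ('a \<Rightarrow> 'a \<Rightarrow> 'a) \<Rightarrow> bool" where
  "inverse_semigroup_on S m \<longleftrightarrow> semigroup_on S m \<and>
     (\<forall>a\<in>S. \<exists>!b. b \<in> S \<and> m (m a b) a = a \<and> m (m b a) b = b)"

definition idems :: "'a set \<Rightarrow> ('a \<Rightarrow> 'a \<Rightarrow> 'a) \<Rightarrow> 'a set" where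
  "idems S m = {e \<in> S. m e e = e}"

definition semilattice_of_groups :: "'a set \<Rightarrow> ('a \<Rightarrow> 'a \<Rightarrow> 'a) \<Rightarrow> bool" where
  "semilattice_of_groups S m \<longleftrightarrow> inverse_semigroup_on S m \<and>
     (\<forall>e\<in>idems S m. \<forall>s\<in>S. m e s = m s e)"

definition sg_hom :: "('a \<Rightarrow> 'b) \<Rightarrow> 'a set \<Rightarrow> ('a \<Rightarrow> 'a \<Rightarrow> 'a) \<Rightarrow> 'b set \<Rightarrow> ('b \<Rightarrow> 'b \<Rightarrow> 'b) \<Rightarrow> bool" where
  "sg_hom f S m T n \<longleftrightarrow> (\<forall>x\<in>S. f x \<in> T) \<and> (\<forall>x\<in>S. \<forall>y\<in>S. f (m x y) = n (f x) (f y))"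

definition sg_mono :: "('a \<Rightarrow> 'b) \<Rightarrow> 'a set \<Rightarrow> ('a \<Rightarrow> 'a \<Rightarrow> 'a) \<Rightarrow> 'b set \<Rightarrow> ('b \<Rightarrow> 'b \<Rightarrow> 'b) \<Rightarrow> bool" where
  "sg_mono f S m T n \<longleftrightarrow> sg_hom f S m T n \<and> inj_on f S"

definition sg_epi :: "('a \<Rightarrow> 'b) \<Rightarrow> 'a set \<Rightarrow> ('a \<Rightarrow> 'a \<Rightarrow> 'a) \<Rightarrow> 'b set \<Rightarrow> ('b \<Rightarrow> 'b \<Rightarrow> 'b) \<Rightarrow> bool" where
  "sg_epi f S m T n \<longleftrightarrow> sg_hom f S m T n \<and> f ` S = T"

definition idempotent_separating :: "('a \<Rightarrow> 'b) \<Rightarrow> 'a set \<Rightarrow> ('a \<Rightarrow> 'a \<Rightarrow> 'a) \<Rightarrow> bool" where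
  "idempotent_separating f S m \<longleftrightarrow>
     (\<forall>e\<in>idems S m. \<forall>e'\<in>idems S m. f e = f e' \<longrightarrow> e = e')"

definition is_extension ::
  "'a set \<Rightarrow> ('a \<Rightarrow> 'a \<Rightarrow> 'a) \<Rightarrow> 'b set \<Rightarrow> ('b \<Rightarrow> 'b \<Rightarrow> 'b) \<Rightarrow> 'c set \<Rightarrow> ('c \<Rightarrow> 'c \<Rightarrow> 'c)
    \<Rightarrow> ('a \<Rightarrow> 'b) \<Rightarrow> ('b \<Rightarrow> 'c) \<Rightarrow> bool" where
  "is_extension A ma U mu S ms i j \<longleftrightarrow>
     inverse_semigroup_on A ma \<and> inverse_semigroup_on U mu \<and> inverse_semigroup_on S ms \<and>
     sg_mono i A ma U mu \<and> sg_epi j U mu S ms \<and> idempotent_separating j U mu \<and>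
     i ` A = {u \<in> U. j u \<in> idems S ms}"

definition nat_le :: "'a set \<Rightarrow> ('a \<Rightarrow> 'a \<Rightarrow> 'a) \<Rightarrow> 'a \<Rightarrow> 'a \<Rightarrow> bool" where
  "nat_le S m s t \<longleftrightarrow> (\<exists>e\<in>idems S m. s = m e t)"

definition sigma_rel :: "'a set \<Rightarrow> ('a \<Rightarrow> 'a \<Rightarrow> 'a) \<Rightarrow> 'a \<Rightarrow> 'a \<Rightarrow> bool" where
  "sigma_rel S m s t \<longleftrightarrow> (\<exists>e\<in>idems S m. m e s = m e t)"

definition F_inverse_monoid :: "'a set \<Rightarrow> ('a \<Rightarrow> 'a \<Rightarrow> 'a) \<Rightarrow> bool" where
  "F_inverse_monoid S m \<longleftrightarrow> inverse_semigroup_on S m \<and>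
     (\<forall>s\<in>S. \<exists>x\<in>S. sigma_rel S m s x \<and>
        (\<forall>t\<in>S. sigma_rel S m s t \<longrightarrow> nat_le S m t x))"

definition transversal :: "('c \<Rightarrow> 'b) \<Rightarrow> ('b \<Rightarrow> 'c) \<Rightarrow> 'b set \<Rightarrow> ('b \<Rightarrow> 'b \<Rightarrow> 'b) \<Rightarrow> 'c set \<Rightarrow> ('c \<Rightarrow> 'c \<Rightarrow> 'c) \<Rightarrow> bool" where
  "transversal \<rho> j U mu S ms \<longleftrightarrow>
     (\<forall>s\<in>S. \<rho> s \<in> U \<and> j (\<rho> s) = s) \<and> (\<forall>e\<in>idems S ms. \<rho> e \<in> idems U mu)"

definition order_preserving_on :: "('c \<Rightarrow> 'b) \<Rightarrow> 'b set \<Rightarrow> ('b \<Rightarrow> 'b \<Rightarrow> 'b) \<Rightarrow> 'c set \<Rightarrow> ('c \<Rightarrow> 'c \<Rightarrow> 'c) \<Rightarrow> bool" where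
  "order_preserving_on \<rho> U mu S ms \<longleftrightarrow>
     (\<forall>s\<in>S. \<forall>t\<in>S. nat_le S ms s t \<longrightarrow> nat_le U mu (\<rho> s) (\<rho> t))"

end

theory Submission
  imports Defs
begin

locale isg = fixes S :: "'a set" and m :: "'a \<Rightarrow> 'a \<Rightarrow> 'a"
  assumes isg: "inverse_semigroup_on S m"
begin

lemma cl[simp,intro]: "x\<in>S \<Longrightarrow> y\<in>S \<Longrightarrow> m x y \<in> S"
  using isg unfolding inverse_semigroup_on_def semigroup_on_def by blast

lemma assoc: "x\<in>S \<Longrightarrow> y\<in>S \<Longrightarrow> z\<in>S \<Longrightarrow> m (m x y) z = m x (m y z)"
  using isg unfolding inverse_semigroup_on_def semigroup_on_def by blast

definition iv where "iv a = (THE b. b \<in> S \<and> m (m a b) a = a \<and> m (m b a) b = b)"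

lemma iv: assumes "a\<in>S" shows "iv a \<in> S" "m a (m (iv a) a) = a" "m (iv a) (m a (iv a)) = iv a"
proof -
  have "\<exists>!b. b \<in> S \<and> m (m a b) a = a \<and> m (m b a) b = b"
    using isg assms unfolding inverse_semigroup_on_def by blast
  then have "iv a \<in> S \<and> m (m a (iv a)) a = a \<and> m (m (iv a) a) (iv a) = iv a"
    unfolding iv_def by (rule theI')
  then show "iv a \<in> S" "m a (m (iv a) a) = a" "m (iv a) (m a (iv a)) = iv a"
    using assms by (auto simp: assoc)
qed

lemma iv_uniq: assumes "a\<in>S" "b\<in>S" "m a (m b a) = a" "m b (m a b) = b" shows "b = iv a"
proof -
  have "\<exists>!b. b \<in> S \<and> m (m a b) a = a \<and> m (m b a) b = b"
    using isg assms unfolding inverse_semigroup_on_def by blast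
  moreover have "b \<in> S \<and> m (m a b) a = a \<and> m (m b a) b = b" using assms by (simp add: assoc)
  ultimately show ?thesis unfolding iv_def by (rule the1_equality[symmetric])
qed

lemma iv_S[simp,intro]: "a\<in>S \<Longrightarrow> iv a \<in> S" using iv by blast

lemma iv_iv[simp]: "a\<in>S \<Longrightarrow> iv (iv a) = a"
  using iv_uniq[of "iv a" a] iv[of a] by simp

abbreviation E where "E \<equiv> idems S m"

lemma E_iff: "e \<in> E \<longleftrightarrow> e \<in> S \<and> m e e = e" by (simp add: idems_def)

lemma iv_E: "e \<in> E \<Longrightarrow> iv e = e"
  using iv_uniq[of e e] by (simp add: E_iff)

lemma idl: "f \<in> E \<Longrightarrow> z \<in> S \<Longrightarrow> m f (m f z) = m f z"
  by (metis E_iff assoc)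

lemma EE_E: assumes e: "e \<in> E" and f: "f \<in> E" shows "m e f \<in> E"
proof -
  have eS: "e\<in>S" and fS: "f\<in>S" using e f by (auto simp: E_iff)
  define x where "x = iv (m e f)"
  have xS: "x \<in> S" using eS fS x_def by auto
  have i1: "m (m e f) (m x (m e f)) = m e f" "m x (m (m e f) x) = x"
    using iv[of "m e f"] eS fS x_def by auto
  have h1: "m (m e f) (m (m f (m x e)) (m e f)) = m e f"
    using i1 eS fS xS e f by (simp add: assoc idl)
  have h2: "m (m f (m x e)) (m (m e f) (m f (m x e))) = m f (m x e)"
  proof -
    have "m (m f (m x e)) (m (m e f) (m f (m x e))) = m f (m (m x (m (m e f) x)) e)"
      using eS fS xS e f by (simp add: assoc idl)
    also have "\<dots> = m f (m x e)" using i1 by simp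
    finally show ?thesis .
  qed
  have "m f (m x e) = iv (m e f)"
    by (rule iv_uniq[OF _ _ h1 h2]) (use eS fS xS in simp_all)
  then have xe: "m f (m x e) = x" using x_def by simp
  have "m x x = x"
  proof -
    have "m x x = m (m f (m x e)) (m f (m x e))" using xe by simp
    also have "\<dots> = m f (m (m x (m (m e f) x)) e)" using eS fS xS e f by (simp add: assoc idl)
    also have "\<dots> = x" using i1 xe by simp
    finally show ?thesis .
  qed
  then have "x \<in> E" using xS by (simp add: E_iff)
  then have "iv x = x" by (rule iv_E)
  moreover have "iv x = m e f" using x_def eS fS by simp
  ultimately show ?thesis using \<open>x \<in> E\<close> by simp
qed

lemma E_comm: assumes e: "e \<in> E" and f: "f \<in> E" shows "m e f = m f e"
proof -
  have eS: "e\<in>S" and fS: "f\<in>S" using e f by (auto simp: E_iff)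
  have ef: "m e f \<in> E" and fe: "m f e \<in> E" using EE_E e f by auto
  have efef: "m e (m f (m e f)) = m e f" using ef eS fS by (metis E_iff assoc cl)
  have fefe: "m f (m e (m f e)) = m f e" using fe eS fS by (metis E_iff assoc cl)
  have "m f e = iv (m e f)"
  proof (rule iv_uniq)
    show "m (m e f) (m (m f e) (m e f)) = m e f"
      using efef eS fS e f by (simp add: assoc idl)
    show "m (m f e) (m (m e f) (m f e)) = m f e"
      using fefe eS fS e f by (simp add: assoc idl)
  qed (use eS fS in auto)
  then show ?thesis using iv_E[OF ef] by simp
qed

lemma xxv_E: "x \<in> S \<Longrightarrow> m x (iv x) \<in> E"
  using iv[of x] by (simp add: E_iff assoc)

lemma xvx_E: "x \<in> S \<Longrightarrow> m (iv x) x \<in> E"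
  using iv[of x] by (simp add: E_iff assoc)

lemma ES: "e \<in> E \<Longrightarrow> e \<in> S" by (simp add: E_iff)

lemma xvl: "x \<in> S \<Longrightarrow> z \<in> S \<Longrightarrow> m x (m (iv x) (m x z)) = m x z"
  using iv[of x] by (metis assoc iv_S cl)

lemma vxl: "x \<in> S \<Longrightarrow> z \<in> S \<Longrightarrow> m (iv x) (m x (m (iv x) z)) = m (iv x) z"
  using xvl[of "iv x" z] by simp

lemma iv_mult: assumes x: "x\<in>S" and y: "y\<in>S" shows "iv (m x y) = m (iv y) (iv x)"
proof -
  have c: "m (iv x) x \<in> E" "m y (iv y) \<in> E" using xxv_E xvx_E x y by auto
  have c1: "m (m (iv x) x) (m y (iv y)) = m (m y (iv y)) (m (iv x) x)" using E_comm c by blast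
  have c2: "m (m y (iv y)) (m (iv x) x) = m (m (iv x) x) (m y (iv y))" using c1 by simp
  show ?thesis
  proof (rule iv_uniq[symmetric])
    have "m (m x y) (m (m (iv y) (iv x)) (m x y)) = m x (m (m (m y (iv y)) (m (iv x) x)) y)"
      using x y by (simp add: assoc)
    also have "\<dots> = m x (m (m (m (iv x) x) (m y (iv y))) y)" using c2 by simp
    also have "\<dots> = m x y" using x y iv[of x] iv[of y] by (simp add: assoc xvl vxl)
    finally show "m (m x y) (m (m (iv y) (iv x)) (m x y)) = m x y" .
    have "m (m (iv y) (iv x)) (m (m x y) (m (iv y) (iv x))) = m (iv y) (m (m (m (iv x) x) (m y (iv y))) (iv x))"
      using x y by (simp add: assoc)
    also have "\<dots> = m (iv y) (m (m (m y (iv y)) (m (iv x) x)) (iv x))" using c1 by simp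
    also have "\<dots> = m (iv y) (iv x)" using x y iv[of x] iv[of y] by (simp add: assoc xvl vxl)
    finally show "m (m (iv y) (iv x)) (m (m x y) (m (iv y) (iv x))) = m (iv y) (iv x)" .
  qed (use x y in auto)
qed

lemma le_char: assumes "nat_le S m s t" "t \<in> S" shows "s = m (m s (iv s)) t" "s \<in> S"
proof -
  obtain e where e: "e \<in> E" "s = m e t" using assms unfolding nat_le_def by blast
  have eS: "e \<in> S" using e ES by blast
  have tt: "m t (iv t) \<in> E" using xxv_E assms by blast
  have "m s (iv s) = m e (m t (m (iv t) e))"
    using e eS assms iv_mult iv_E by (simp add: assoc)
  also have "\<dots> = m e (m (m t (iv t)) e)" using eS assms by (simp add: assoc)
  also have "\<dots> = m e (m e (m t (iv t)))" using E_comm[OF tt e(1)] by simp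
  finally have "m s (iv s) = m e (m t (iv t))" using idl e eS assms by simp
  then show "s = m (m s (iv s)) t" using e eS assms iv[of t] by (simp add: assoc)
  show "s \<in> S" using e eS assms by simp
qed

lemma le_intro: "e \<in> E \<Longrightarrow> s = m e t \<Longrightarrow> nat_le S m s t"
  unfolding nat_le_def by blast

lemma le_refl: "s \<in> S \<Longrightarrow> nat_le S m s s"
  using le_intro[of "m s (iv s)" s s] xxv_E iv[of s] by (simp add: assoc)

lemma le_antisym: assumes "nat_le S m x y" "nat_le S m y x" "x\<in>S" "y\<in>S" shows "x = y"
proof -
  obtain e where e: "e \<in> E" "x = m e y" using assms unfolding nat_le_def by blast
  obtain f where f: "f \<in> E" "y = m f x" using assms unfolding nat_le_def by blast
  have "y = m f (m e y)" using e f by simp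
  also have "\<dots> = m e (m f y)" using e f assms E_comm[of e f] by (metis ES assoc)
  also have "\<dots> = m e y" using f assms ES idl by metis
  finally show ?thesis using e by simp
qed

lemma sig_refl: "s \<in> S \<Longrightarrow> sigma_rel S m s s"
  unfolding sigma_rel_def using xxv_E by blast

lemma sig_sym: "sigma_rel S m s t \<Longrightarrow> sigma_rel S m t s"
  unfolding sigma_rel_def by metis

lemma sig_trans: assumes "sigma_rel S m s t" "sigma_rel S m t u" "s\<in>S" "t\<in>S" "u\<in>S"
  shows "sigma_rel S m s u"
proof -
  obtain e where e: "e \<in> E" "m e s = m e t" using assms unfolding sigma_rel_def by blast
  obtain f where f: "f \<in> E" "m f t = m f u" using assms unfolding sigma_rel_def by blast
  have eS: "e \<in> S" and fS: "f \<in> S" using e f ES by auto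
  have "m (m f e) s = m (m e f) u"
    using e f eS fS assms E_comm[of e f] by (metis assoc)
  also have "\<dots> = m (m f e) u" using E_comm[of e f] e f by simp
  finally show ?thesis unfolding sigma_rel_def using EE_E[OF f(1) e(1)] by blast
qed

lemma le_sig: assumes "nat_le S m s t" "t \<in> S" shows "sigma_rel S m s t"
proof -
  have s: "s = m (m s (iv s)) t" "s \<in> S" using le_char assms by auto
  have "m (m s (iv s)) s = s" using iv[of s] s by (simp add: assoc)
  then show ?thesis unfolding sigma_rel_def using xxv_E[of s] s by metis
qed

lemma E_sig: "e \<in> E \<Longrightarrow> f \<in> E \<Longrightarrow> sigma_rel S m e f"
  unfolding sigma_rel_def using EE_E[of e f] by (metis ES E_iff assoc E_comm idl)

end

lemma hom_iv: assumes "isg U mu" "isg S ms" "sg_hom j U mu S ms" "u \<in> U"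
  shows "j (isg.iv U mu u) = isg.iv S ms (j u)"
proof -
  interpret Ug: isg U mu by fact
  interpret Sg: isg S ms by fact
  have h: "\<forall>x\<in>U. j x \<in> S" "\<forall>x\<in>U. \<forall>y\<in>U. j (mu x y) = ms (j x) (j y)"
    using assms(3) unfolding sg_hom_def by auto
  show ?thesis
  proof (rule Sg.iv_uniq)
    show "ms (j u) (ms (j (Ug.iv u)) (j u)) = j u"
      using h Ug.iv[of u] assms(4) by (metis Ug.cl Ug.iv_S)
    show "ms (j (Ug.iv u)) (ms (j u) (j (Ug.iv u))) = j (Ug.iv u)"
      using h Ug.iv[of u] assms(4) by (metis Ug.cl Ug.iv_S)
  qed (use h assms(4) in auto)
qed

theorem proposition3p26:
  fixes A :: "'a set" and ma :: "'a \<Rightarrow> 'a \<Rightarrow> 'a"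
    and U :: "'b set" and mu :: "'b \<Rightarrow> 'b \<Rightarrow> 'b"
    and S :: "'c set" and ms :: "'c \<Rightarrow> 'c \<Rightarrow> 'c"
    and i :: "'a \<Rightarrow> 'b" and j :: "'b \<Rightarrow> 'c"
  assumes "semilattice_of_groups A ma"
    and "is_extension A ma U mu S ms i j"
    and "F_inverse_monoid S ms"
  shows "\<exists>\<rho>. transversal \<rho> j U mu S ms \<and> order_preserving_on \<rho> U mu S ms"
proof -
  have ext: "inverse_semigroup_on U mu" "inverse_semigroup_on S ms" "sg_epi j U mu S ms"
    "idempotent_separating j U mu"
    using assms(2) unfolding is_extension_def by auto
  interpret Ug: isg U mu by (unfold_locales, rule ext(1))
  interpret Sg: isg S ms by (unfold_locales, rule ext(2))
  have hom: "sg_hom j U mu S ms" using ext(3) unfolding sg_epi_def by auto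
  have jS: "\<And>x. x\<in>U \<Longrightarrow> j x \<in> S" and jm: "\<And>x y. x\<in>U \<Longrightarrow> y\<in>U \<Longrightarrow> j (mu x y) = ms (j x) (j y)"
    using hom unfolding sg_hom_def by auto
  have surj: "j ` U = S" using ext(3) unfolding sg_epi_def by auto
  have sep: "\<And>u v. u \<in> Ug.E \<Longrightarrow> v \<in> Ug.E \<Longrightarrow> j u = j v \<Longrightarrow> u = v"
    using ext(4) unfolding idempotent_separating_def by blast
  have jiv: "\<And>u. u \<in> U \<Longrightarrow> j (Ug.iv u) = Sg.iv (j u)"
    using hom_iv[OF _ _ hom] Ug.isg_axioms Sg.isg_axioms by blast
  have epsex: "\<exists>u. u \<in> Ug.E \<and> j u = e" if e: "e \<in> Sg.E" for e
  proof -
    obtain v where v: "v \<in> U" "j v = e" using surj e Sg.ES by blast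
    have "j (mu v (Ug.iv v)) = e" using v jm jiv Sg.iv_E[OF e] Sg.E_iff e by simp
    then show ?thesis using Ug.xxv_E v by blast
  qed
  define eps where "eps e = (THE u. u \<in> Ug.E \<and> j u = e)" for e
  have eps: "eps e \<in> Ug.E \<and> j (eps e) = e" if e: "e \<in> Sg.E" for e
  proof -
    have "\<exists>!u. u \<in> Ug.E \<and> j u = e" using epsex[OF e] sep by blast
    then show ?thesis unfolding eps_def by (rule theI')
  qed
  have eps_uniq: "u = eps e" if "u \<in> Ug.E" "j u = e" "e \<in> Sg.E" for u e
    using eps[OF that(3)] sep that by metis
  have Fi: "\<forall>s\<in>S. \<exists>x\<in>S. sigma_rel S ms s x \<and> (\<forall>t\<in>S. sigma_rel S ms s t \<longrightarrow> nat_le S ms t x)"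
    using assms(3) unfolding F_inverse_monoid_def by blast
  define Mx where "Mx s = (SOME x. x\<in>S \<and> sigma_rel S ms s x \<and> (\<forall>t\<in>S. sigma_rel S ms s t \<longrightarrow> nat_le S ms t x))" for s
  have Mx: "Mx s \<in> S \<and> sigma_rel S ms s (Mx s) \<and> (\<forall>t\<in>S. sigma_rel S ms s t \<longrightarrow> nat_le S ms t (Mx s))"
    if "s \<in> S" for s
  proof -
    have "\<exists>x. x\<in>S \<and> sigma_rel S ms s x \<and> (\<forall>t\<in>S. sigma_rel S ms s t \<longrightarrow> nat_le S ms t x)"
      using Fi that by blast
    then show ?thesis unfolding Mx_def by (rule someI_ex)
  qed
  have Mx_le: "nat_le S ms s (Mx s)" if "s \<in> S" for s
    using Mx[OF that] Sg.sig_refl that by blast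
  have Mx_eq: "Mx s = Mx t" if st: "nat_le S ms s t" "s \<in> S" "t \<in> S" for s t
  proof -
    have sst: "sigma_rel S ms s t" using Sg.le_sig st by blast
    have a: "sigma_rel S ms t (Mx s)" using Sg.sig_trans[OF Sg.sig_sym[OF sst]] Mx[of s] st by blast
    have b: "sigma_rel S ms s (Mx t)" using Sg.sig_trans[OF sst] Mx[of t] st by blast
    show ?thesis using Sg.le_antisym Mx[of s] Mx[of t] a b st by blast
  qed
  have Mx_E: "Mx s \<in> Sg.E" if s: "s \<in> Sg.E" for s
  proof -
    define M where "M = Mx s"
    have MS: "M \<in> S" using Mx s Sg.ES M_def by blast
    define p where "p = ms M (Sg.iv M)"
    have pE: "p \<in> Sg.E" using Sg.xxv_E MS p_def by blast
    have "sigma_rel S ms s p" using Sg.E_sig s pE by blast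
    then have "nat_le S ms p M" using Mx[of s] s Sg.ES pE M_def by blast
    then have "p = ms (ms p (Sg.iv p)) M" using Sg.le_char MS by blast
    also have "\<dots> = M" using pE Sg.iv_E Sg.E_iff p_def MS Sg.iv[of M] by (simp add: Sg.assoc)
    finally show ?thesis using pE M_def by simp
  qed
  define rho0 where "rho0 x = (if x \<in> Sg.E then eps x else (SOME u. u\<in>U \<and> j u = x))" for x
  have rho0: "rho0 x \<in> U \<and> j (rho0 x) = x" if "x \<in> S" for x
  proof (cases "x \<in> Sg.E")
    case True then show ?thesis using eps[of x] Ug.ES rho0_def by auto
  next
    case False
    have "\<exists>u. u\<in>U \<and> j u = x" using surj that by blast
    then show ?thesis using False rho0_def by (metis (mono_tags, lifting) someI_ex)
  qed
  have rho0E: "rho0 x \<in> Ug.E" if "x \<in> Sg.E" for x using eps[OF that] that rho0_def by simp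
  define rho where "rho s = mu (eps (ms s (Sg.iv s))) (rho0 (Mx s))" for s
  have tr: "transversal rho j U mu S ms"
    unfolding transversal_def
  proof (intro conjI ballI)
    fix s assume s: "s \<in> S"
    have e: "eps (ms s (Sg.iv s)) \<in> Ug.E \<and> j (eps (ms s (Sg.iv s))) = ms s (Sg.iv s)"
      using eps Sg.xxv_E s by blast
    have r: "rho0 (Mx s) \<in> U \<and> j (rho0 (Mx s)) = Mx s" using rho0 Mx s by blast
    show "rho s \<in> U" using e r Ug.ES rho_def by auto
    have "j (rho s) = ms (ms s (Sg.iv s)) (Mx s)" using e r Ug.ES rho_def jm by auto
    also have "\<dots> = s" using Sg.le_char[OF Mx_le[OF s]] Mx s by metis
    finally show "j (rho s) = s" .
  next
    fix s assume s: "s \<in> Sg.E"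
    have e: "eps (ms s (Sg.iv s)) \<in> Ug.E"
      using eps Sg.xxv_E s Sg.ES by blast
    show "rho s \<in> Ug.E" using Ug.EE_E[OF e rho0E[OF Mx_E[OF s]]] rho_def by simp
  qed
  have op: "order_preserving_on rho U mu S ms"
    unfolding order_preserving_on_def
  proof (intro ballI impI)
    fix s t assume s: "s \<in> S" and t: "t \<in> S" and st: "nat_le S ms s t"
    have eq: "Mx s = Mx t" using Mx_eq st s t by blast
    define es where "es = ms s (Sg.iv s)"
    define et where "et = ms t (Sg.iv t)"
    have esE: "es \<in> Sg.E" and etE: "et \<in> Sg.E" using Sg.xxv_E s t es_def et_def by auto
    have sdef: "s = ms es t" using Sg.le_char[OF st t] es_def by blast
    have ivs: "Sg.iv s = ms (Sg.iv t) es" using sdef Sg.iv_mult esE etE t Sg.ES Sg.iv_E by metis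
    have c: "ms s (Sg.iv s) = ms (ms es t) (ms (Sg.iv t) es)"
      by (rule arg_cong2[where f=ms, OF sdef ivs])
    have "es = ms (ms es t) (ms (Sg.iv t) es)"
      using c by (simp only: es_def)
    also have "\<dots> = ms es (ms et es)"
      using t esE Sg.ES unfolding et_def by (simp add: Sg.assoc)
    also have "\<dots> = ms es (ms es et)" using Sg.E_comm esE etE by simp
    also have "\<dots> = ms es et" using Sg.idl esE etE Sg.ES by blast
    finally have eset: "ms es et = es" by simp
    have ee: "eps es \<in> Ug.E \<and> j (eps es) = es" "eps et \<in> Ug.E \<and> j (eps et) = et"
      using eps esE etE by auto
    have "mu (eps es) (eps et) = eps es"
      using eps_uniq[OF Ug.EE_E[of "eps es" "eps et"] _ esE] ee jm Ug.ES eset by auto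
    moreover have r: "rho0 (Mx t) \<in> U" using rho0 Mx t by blast
    ultimately have "rho s = mu (eps es) (rho t)"
      unfolding rho_def es_def[symmetric] et_def[symmetric] eq
      using ee Ug.ES by (simp add: Ug.assoc[symmetric])
    then show "nat_le U mu (rho s) (rho t)" using Ug.le_intro ee by blast
  qed
  show ?thesis using tr op by blast
qed

end
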